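(* Let $m\geq 2$ and $n\geq 2$ be integers, let $T_m$ be a tree of order $m$ and $H_n$ a graph of order $n$. Then $rvc(T_m\diamond H_n)=rvc(T_m)$.
   Context: All graphs are finite, simple, connected and undirected. A rainbow vertex $k$-coloring of $G$ is a map $c:V(G)\to\{1,\dots,k\}$ such that every two vertices are joined by a path whose internal vertices all receive distinct colors; $rvc(G)$ is the least $k$ for which $G$ has one. For graphs $G_m$ (order $m$) and $H_n$ (order $n$) on disjoint vertex sets, the edge corona $G_m\diamond H_n$ is obtained from one copy of $G_m$ and $|E(G_m)|$ vertex-disjoint copies of $H_n$, one per edge of $G_m$, by joining both end vertices of the $j$-th edge of $G_m$ to every vertex of the $j$-th copy of $H_n$. *)

theory Defs
  imports Main
begin

definition simple_graph :: "'a set \<Rightarrow> 'a set set \<Rightarrow> bool" where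
  "simple_graph V E \<longleftrightarrow> finite V \<and> (\<forall>e\<in>E. \<exists>u v. u \<noteq> v \<and> u \<in> V \<and> v \<in> V \<and> e = {u, v})"

definition is_path :: "'a set \<Rightarrow> 'a set set \<Rightarrow> 'a list \<Rightarrow> 'a \<Rightarrow> 'a \<Rightarrow> bool" where
  "is_path V E xs u v \<longleftrightarrow> xs \<noteq> [] \<and> hd xs = u \<and> last xs = v \<and> distinct xs \<and>
     set xs \<subseteq> V \<and> (\<forall>i. Suc i < length xs \<longrightarrow> {xs ! i, xs ! Suc i} \<in> E)"

definition graph_connected :: "'a set \<Rightarrow> 'a set set \<Rightarrow> bool" where
  "graph_connected V E \<longleftrightarrow> V \<noteq> {} \<and> (\<forall>u\<in>V. \<forall>v\<in>V. \<exists>xs. is_path V E xs u v)"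

definition is_cycle :: "'a set \<Rightarrow> 'a set set \<Rightarrow> 'a list \<Rightarrow> bool" where
  "is_cycle V E xs \<longleftrightarrow> length xs \<ge> 3 \<and> distinct xs \<and> set xs \<subseteq> V \<and>
     (\<forall>i. Suc i < length xs \<longrightarrow> {xs ! i, xs ! Suc i} \<in> E) \<and> {last xs, hd xs} \<in> E"

definition is_tree :: "'a set \<Rightarrow> 'a set set \<Rightarrow> bool" where
  "is_tree V E \<longleftrightarrow> simple_graph V E \<and> graph_connected V E \<and> \<not> (\<exists>xs. is_cycle V E xs)"

definition internal :: "'a list \<Rightarrow> 'a set" where
  "internal xs = set (butlast (tl xs))"

definition rainbow_vertex_coloring :: "'a set \<Rightarrow> 'a set set \<Rightarrow> ('a \<Rightarrow> nat) \<Rightarrow> nat \<Rightarrow> bool" where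
  "rainbow_vertex_coloring V E c k \<longleftrightarrow> c ` V \<subseteq> {1..k} \<and>
     (\<forall>u\<in>V. \<forall>v\<in>V. \<exists>xs. is_path V E xs u v \<and> inj_on c (internal xs))"

definition rvc :: "'a set \<Rightarrow> 'a set set \<Rightarrow> nat" where
  "rvc V E = (LEAST k. \<exists>c. rainbow_vertex_coloring V E c k)"

text \<open>Edge corona G \<diamond> H: vertices are Inl v (v a vertex of G) and Inr (e, h),
  the copy of vertex h of H attached to the edge e of G.\<close>
definition corona_V :: "'a set \<Rightarrow> 'a set set \<Rightarrow> 'b set \<Rightarrow> ('a + ('a set \<times> 'b)) set" where
  "corona_V VG EG VH = Inl ` VG \<union> {Inr (e, h) | e h. e \<in> EG \<and> h \<in> VH}"

definition corona_E :: "'a set \<Rightarrow> 'a set set \<Rightarrow> 'b set \<Rightarrow> 'b set set \<Rightarrow> ('a + ('a set \<times> 'b)) set set" where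
  "corona_E VG EG VH EH =
     (image Inl) ` EG
     \<union> {{Inr (e, x), Inr (e, y)} | e x y. e \<in> EG \<and> {x, y} \<in> EH}
     \<union> {{Inl u, Inr (e, h)} | e u h. e \<in> EG \<and> u \<in> e \<and> h \<in> VH}"

end

theory Submission
  imports Defs
begin


lemma path_iff: "is_path V E xs u v \<longleftrightarrow> xs \<noteq> [] \<and> hd xs = u \<and> last xs = v \<and> distinct xs \<and>
   set xs \<subseteq> V \<and> successively (\<lambda>x y. {x,y} \<in> E) xs"
  unfolding is_path_def successively_conv_nth by blast

lemma edge_neq: "simple_graph V E \<Longrightarrow> {a,b} \<in> E \<Longrightarrow> a \<noteq> b \<and> a \<in> V \<and> b \<in> V"
  unfolding simple_graph_def by (metis doubleton_eq_iff insert_absorb2 insert_iff singleton_insert_inj_eq)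

lemma distinct_hd_last: "distinct ys \<Longrightarrow> ys \<noteq> [] \<Longrightarrow> hd ys = last ys \<Longrightarrow> ys = [hd ys]"
  by (cases ys rule: rev_cases) (auto split: if_splits simp: hd_append)

lemma tree_L0:
  assumes T: "is_tree V E" and e: "{a,b} \<in> E" and p: "is_path V E xs a b"
  shows "xs = [a,b]"
proof -
  have sg: "simple_graph V E" using T unfolding is_tree_def by blast
  have ab: "a \<noteq> b" using edge_neq[OF sg e] by blast
  have nc: "\<not> is_cycle V E xs" using T unfolding is_tree_def by blast
  from p have xs: "xs \<noteq> []" "hd xs = a" "last xs = b" "distinct xs" "set xs \<subseteq> V"
    "\<forall>i. Suc i < length xs \<longrightarrow> {xs ! i, xs ! Suc i} \<in> E" unfolding is_path_def by auto
  show ?thesis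
  proof (cases "length xs \<ge> 3")
    case True
    have "{last xs, hd xs} \<in> E" using xs e by (simp add: insert_commute)
    then have "is_cycle V E xs" using True xs unfolding is_cycle_def by blast
    with nc show ?thesis by blast
  next
    case False
    have "length xs > 0" using xs(1) by simp
    then have "length xs = 1 \<or> length xs = 2" using False by linarith
    then show ?thesis
    proof
      assume "length xs = 1" then obtain x where "xs = [x]" by (cases xs) auto
      then show ?thesis using xs ab by auto
    next
      assume "length xs = 2" then obtain x y where "xs = [x,y]"
        by (cases xs; cases "tl xs") auto
      then show ?thesis using xs by auto
    qed
  qed
qed

lemma path_unique:
  assumes T: "is_tree V E"
  shows "is_path V E xs u v \<Longrightarrow> is_path V E ys u v \<Longrightarrow> xs = ys"
proof (induction xs arbitrary: v ys rule: rev_induct)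
  case Nil then show ?case by (simp add: is_path_def)
next
  case (snoc w xs')
  have sg: "simple_graph V E" using T unfolding is_tree_def by blast
  from snoc.prems(1) have w: "w = v" by (simp add: is_path_def)
  show ?case
  proof (cases "xs' = []")
    case True
    then have "u = v" using snoc.prems(1) w by (simp add: is_path_def)
    then have "ys = [u]" using snoc.prems(2) distinct_hd_last unfolding is_path_def by metis
    then show ?thesis using True w \<open>u = v\<close> by simp
  next
    case False
    define v' where "v' = last xs'"
    have P1: "is_path V E xs' u v'" using snoc.prems(1) False
      unfolding path_iff v'_def by (auto simp: successively_append_iff hd_append)
    have ev: "{v', v} \<in> E" using snoc.prems(1) False
      unfolding path_iff v'_def by (auto simp: successively_append_iff)
    have v'v: "v' \<notin> set [v]" using snoc.prems(1) False w unfolding v'_def path_iff by auto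
    have vxs': "v \<notin> set xs'" using snoc.prems(1) w unfolding path_iff by auto
    show ?thesis
    proof (cases "v' \<in> set ys")
      case True
      then obtain ys1 ys2 where ys: "ys = ys1 @ v' # ys2" by (meson split_list)
      have "is_path V E (ys1 @ [v']) u v'" using snoc.prems(2) unfolding path_iff ys
        by (auto simp: successively_append_iff hd_append split: if_splits)
      then have e1: "xs' = ys1 @ [v']" using snoc.IH[OF P1] by blast
      have "is_path V E (v' # ys2) v' v" using snoc.prems(2) unfolding path_iff ys
        by (auto simp: successively_append_iff)
      then have "v' # ys2 = [v', v]" using tree_L0[OF T ev] by blast
      then show ?thesis using ys e1 w by simp
    next
      case False
      have "v' \<in> V" using P1 False unfolding path_iff v'_def using \<open>xs' \<noteq> []\<close> by auto
      then have "is_path V E (ys @ [v']) u v'" using snoc.prems(2) False ev unfolding path_iff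
        by (auto simp: successively_append_iff hd_append insert_commute)
      then have "xs' = ys @ [v']" using snoc.IH[OF P1] by blast
      then have "v \<in> set xs'" using snoc.prems(2) unfolding path_iff by auto
      then show ?thesis using vxs' by blast
    qed
  qed
qed



lemma un3: "x \<in> A \<union> B \<union> C \<Longrightarrow> x \<notin> B \<Longrightarrow> x \<notin> C \<Longrightarrow> x \<in> A" by blast
lemma CE1: fixes VH :: "'b set" shows "{Inl a, Inl b} \<in> corona_E VT ET VH EH \<Longrightarrow> {a,b} \<in> ET"
proof -
  assume A: "{Inl a, Inl b} \<in> corona_E VT ET VH EH"
  have n2: "{Inl a, Inl b} \<notin> {{Inr (e, x), Inr (e, y)} | e x y. e \<in> ET \<and> {x, y} \<in> EH}"
  proof
    assume "{Inl a, Inl b} \<in> {{Inr (e, x), Inr (e, y)} | e x y. e \<in> ET \<and> {x, y} \<in> EH}"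
    then obtain e0 x y where "{Inl a, Inl b} = {Inr (e0, x), Inr (e0, y)}" by blast
    then have "Inl a \<in> {Inr (e0, x), Inr (e0, y)}" by (metis insertI1)
    then show False by simp
  qed
  have n3: "{Inl a, Inl b} \<notin> {{Inl u, Inr (e, h)} | e u h. e \<in> ET \<and> u \<in> e \<and> h \<in> VH}"
  proof
    assume "{Inl a, Inl b} \<in> {{Inl u, Inr (e, h)} | e u h. e \<in> ET \<and> u \<in> e \<and> h \<in> VH}"
    then obtain u e h where "{Inl a, Inl b} = {Inl u, Inr (e, h)}" by blast
    then have "Inr (e,h) \<in> {Inl a, Inl b}" by (metis insertI1 insertI2)
    then show False by simp
  qed
  from un3[OF A[unfolded corona_E_def] n2 n3]
  obtain e where "e \<in> ET" "(Inl ` e :: ('a + 'a set \<times> 'b) set) = {Inl a, Inl b}" by blast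
  moreover have "(Inl ` {a,b} :: ('a + 'a set \<times> 'b) set) = {Inl a, Inl b}" by simp
  ultimately show ?thesis by (metis inj_Inl inj_image_eq_iff)
qed

lemma CE2: "{Inl a, Inr (e,h)} \<in> corona_E VT ET VH EH \<Longrightarrow> e \<in> ET \<and> a \<in> e"
proof -
  assume A: "{Inl a, Inr (e,h)} \<in> corona_E VT ET VH EH"
  have n1: "{Inl a, Inr (e,h)} \<notin> (image Inl) ` ET"
  proof
    assume "{Inl a, Inr (e,h)} \<in> (image Inl) ` ET"
    then obtain S where "{Inl a, Inr (e,h)} = Inl ` S" by blast
    then have "Inr (e,h) \<in> Inl ` S" by blast
    then show False by blast
  qed
  have n2: "{Inl a, Inr (e,h)} \<notin> {{Inr (e, x), Inr (e, y)} | e x y. e \<in> ET \<and> {x, y} \<in> EH}"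
  proof
    assume "{Inl a, Inr (e,h)} \<in> {{Inr (e, x), Inr (e, y)} | e x y. e \<in> ET \<and> {x, y} \<in> EH}"
    then obtain e0 x y where "{Inl a, Inr (e,h)} = {Inr (e0, x), Inr (e0, y)}" by blast
    then have "Inl a \<in> {Inr (e0, x), Inr (e0, y)}" by blast
    then show False by simp
  qed
  from A n1 n2 have "{Inl a, Inr (e,h)} \<in> {{Inl u, Inr (e, h)} | e u h. e \<in> ET \<and> u \<in> e \<and> h \<in> VH}"
    unfolding corona_E_def by blast
  then obtain e0 u h0 where "{Inl a, Inr (e,h)} = {Inl u, Inr (e0, h0)}" "e0 \<in> ET" "u \<in> e0" by blast
  then show ?thesis by (auto simp: doubleton_eq_iff)
qed

lemma un3b: "x \<in> A \<union> B \<union> C \<Longrightarrow> x \<notin> A \<Longrightarrow> x \<notin> C \<Longrightarrow> x \<in> B" by blast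

lemma CE3: fixes VT :: "'a set" and VH :: "'b set" shows "{Inr (e,h), Inr (e',h')} \<in> corona_E VT ET VH EH \<Longrightarrow> e = e'"
proof -
  assume A: "{Inr (e,h), Inr (e',h')} \<in> corona_E VT ET VH EH"
  have n1: "{Inr (e,h), Inr (e',h')} \<notin> (image Inl) ` ET"
  proof
    assume "{Inr (e,h), Inr (e',h')} \<in> (image Inl) ` ET"
    then obtain S where "{Inr (e,h), Inr (e',h')} = Inl ` S" by blast
    then have "Inr (e,h) \<in> Inl ` S" by blast
    then show False by blast
  qed
  have n3: "{Inr (e,h), Inr (e',h')} \<notin> {{Inl u, Inr (e, h)} | e u h. e \<in> ET \<and> u \<in> e \<and> h \<in> VH}"
  proof
    assume "{Inr (e,h), Inr (e',h')} \<in> {{Inl u, Inr (e, h)} | e u h. e \<in> ET \<and> u \<in> e \<and> h \<in> VH}"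
    then obtain u e0 h0 where "{Inr (e,h), Inr (e',h')} = {Inl u, Inr (e0, h0)}" by blast
    then have "Inl u \<in> {Inr (e,h), Inr (e',h')}" by blast
    then show False by simp
  qed
  from un3b[OF A[unfolded corona_E_def] n1 n3]
  obtain e0 x y where "({Inr (e,h), Inr (e',h')} :: ('a + 'a set \<times> 'b) set) = {Inr (e0, x), Inr (e0, y)}" by blast
  then show ?thesis by (auto simp: doubleton_eq_iff)
qed

lemma run_same:
  "successively (\<lambda>x y. {x,y} \<in> corona_E VT ET VH EH) (Inr (e,h) # ws) \<Longrightarrow> \<forall>w\<in>set ws. \<not> isl w
   \<Longrightarrow> \<forall>w\<in>set ws. \<exists>h'. w = Inr (e,h')"
proof (induction ws arbitrary: h)
  case Nil then show ?case by simp
next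
  case (Cons w ws)
  obtain e' h' where w: "w = Inr (e',h')" using Cons.prems(2) by (cases w) auto
  have "e' = e" using Cons.prems(1) w CE3 by (metis successively.simps(3))
  then show ?case using Cons.IH[of h'] Cons.prems w by auto
qed

lemma seg:
  assumes sg: "simple_graph VT ET"
    and s: "successively (\<lambda>x y. {x,y} \<in> corona_E VT ET VH EH) (Inl a # ws @ [Inl b])"
    and r: "\<forall>w\<in>set ws. \<not> isl w" and d: "distinct (Inl a # ws @ [Inl b])"
  shows "{a,b} \<in> ET"
proof (cases ws)
  case Nil then show ?thesis using s CE1 by auto
next
  case (Cons w ws')
  obtain e h where w: "w = Inr (e,h)" using r Cons by (cases w) auto
  have "{Inl a, Inr (e,h)} \<in> corona_E VT ET VH EH" using s Cons w by simp
  then have e1: "e \<in> ET \<and> a \<in> e" by (rule CE2)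
  have "successively (\<lambda>x y. {x,y} \<in> corona_E VT ET VH EH) ((Inr (e,h) # ws') @ [Inl b])"
    using s Cons w by simp
  then have s2: "successively (\<lambda>x y. {x,y} \<in> corona_E VT ET VH EH) (Inr (e,h) # ws')"
    by (simp only: successively_append_iff)
  have r2: "\<forall>w\<in>set ws'. \<not> isl w" using r Cons by simp
  have same: "\<forall>w\<in>set ws'. \<exists>h'. w = Inr (e,h')" using run_same[OF s2 r2] .
  have "\<exists>h'. last ws = Inr (e,h')"
  proof (cases "ws' = []")
    case True then show ?thesis using Cons w by simp
  next
    case False then have "last ws \<in> set ws'" using Cons by simp
    then show ?thesis using same by blast
  qed
  then obtain h' where lw: "last ws = Inr (e,h')" by blast
  have "successively (\<lambda>x y. {x,y} \<in> corona_E VT ET VH EH) ((Inl a # ws) @ [Inl b])"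
    using s by simp
  then have "{last (Inl a # ws), Inl b} \<in> corona_E VT ET VH EH"
    by (simp only: successively_append_iff) simp
  then have "{Inl b, Inr (e,h')} \<in> corona_E VT ET VH EH" using lw Cons by (simp add: insert_commute)
  then have "e \<in> ET \<and> b \<in> e" by (rule CE2)
  then have "b \<in> e" by simp
  have "a \<noteq> b" using d by auto
  obtain x y where "x \<noteq> y" "e = {x,y}" using sg e1 unfolding simple_graph_def by blast
  then have "e = {a,b}" using e1 \<open>b \<in> e\<close> \<open>a \<noteq> b\<close> by fastforce
  then show ?thesis using e1 by simp
qed

lemma proj_succ:
  assumes sg: "simple_graph VT ET"
  shows "successively (\<lambda>x y. {x,y} \<in> corona_E VT ET VH EH) xs \<Longrightarrow> distinct xs \<Longrightarrow> xs \<noteq> []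
    \<Longrightarrow> isl (hd xs) \<Longrightarrow> isl (last xs)
    \<Longrightarrow> successively (\<lambda>x y. {x,y} \<in> ET) (map projl (filter isl xs))"
proof (induction "length xs" arbitrary: xs rule: less_induct)
  case less
  obtain x rest where xr: "xs = x # rest" using less.prems(3) by (cases xs) auto
  obtain a where "x = Inl a" using less.prems(4) xr by (cases x) auto
  with xr have xs: "xs = Inl a # rest" by simp
  show ?case
  proof (cases "rest = []")
    case True then show ?thesis using xs by simp
  next
    case False
    then have "last xs \<in> set rest" using xs by simp
    then have "\<exists>x\<in>set rest. isl x" using less.prems(5) by blast
    then obtain ws z zs where rs: "rest = ws @ z # zs" "isl z" "\<forall>y\<in>set ws. \<not> isl y"
      by (rule split_list_first_propE)
    obtain b where z: "z = Inl b" using rs(2) by (cases z) auto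
    have x1: "xs = (Inl a # ws @ [Inl b]) @ zs" using xs rs z by simp
    have x2: "xs = (Inl a # ws) @ (Inl b # zs)" using xs rs z by simp
    have s1: "successively (\<lambda>x y. {x,y} \<in> corona_E VT ET VH EH) (Inl a # ws @ [Inl b])"
      using less.prems(1) unfolding x1 successively_append_iff by blast
    have d1: "distinct (Inl a # ws @ [Inl b])"
      using less.prems(2) unfolding x1 distinct_append by blast
    have ab: "{a,b} \<in> ET" by (rule seg[OF sg s1 rs(3) d1])
    have s2: "successively (\<lambda>x y. {x,y} \<in> corona_E VT ET VH EH) (Inl b # zs)"
      using less.prems(1) unfolding x2 successively_append_iff by blast
    have d2: "distinct (Inl b # zs)"
      using less.prems(2) unfolding x2 distinct_append by blast
    have l2: "isl (last (Inl b # zs))" using less.prems(5) x2 by simp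
    have len: "length (Inl b # zs) < length xs" using x2 by simp
    have IH: "successively (\<lambda>x y. {x,y} \<in> ET) (map projl (filter isl (Inl b # zs)))"
      using less.hyps[OF len s2 d2] l2 by simp
    have "filter isl ws = []" using rs(3) by (simp add: filter_empty_conv)
    then have "map projl (filter isl xs) = a # map projl (filter isl (Inl b # zs))"
      using x2 by simp
    then show ?thesis using IH ab by (simp add: successively_Cons)
  qed
qed



lemma path_rev: "is_path V E xs u v \<Longrightarrow> is_path V E (rev xs) v u"
  unfolding path_iff by (auto simp: hd_rev last_rev insert_commute elim: successively_mono)

lemma path_prefix: "is_path V E (R1 @ t # R2) u v \<Longrightarrow> is_path V E (R1 @ [t]) u t"
  unfolding path_iff by (auto simp: successively_append_iff hd_append split: if_splits)

lemma path_suffix: "is_path V E (R1 @ t # R2) u v \<Longrightarrow> is_path V E (t # R2) t v"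
  unfolding path_iff by (auto simp: successively_append_iff)

lemma path_snoc: "is_path V E xs u v \<Longrightarrow> w \<notin> set xs \<Longrightarrow> w \<in> V \<Longrightarrow> {v,w} \<in> E
   \<Longrightarrow> is_path V E (xs @ [w]) u w"
  unfolding path_iff by (auto simp: successively_append_iff hd_append)

lemma tree_sg: "is_tree V E \<Longrightarrow> simple_graph V E" unfolding is_tree_def by blast

lemma path_start:
  assumes T: "is_tree V E" and R: "is_path V E R s y" and e: "{s,t} \<in> E" and t: "t \<in> set R"
  shows "\<exists>M. R = s # t # M"
proof -
  obtain R1 R2 where R12: "R = R1 @ t # R2" using t by (meson split_list)
  have "is_path V E (R1 @ [t]) s t" using path_prefix R R12 by metis
  then have "R1 @ [t] = [s,t]" using tree_L0[OF T e] by blast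
  then have "R1 = [s]" by simp
  then show ?thesis using R12 by simp
qed

lemma tree_B:
  assumes T: "is_tree V E" and Qa: "is_path V E Qa x a" and Qb: "is_path V E Qb x b"
    and e: "{a,b} \<in> E"
  shows "b \<in> set Qa \<or> a \<in> set Qb"
proof (cases "b \<in> set Qa")
  case False
  have "b \<in> V" using edge_neq[OF tree_sg[OF T] e] by blast
  then have "is_path V E (Qa @ [b]) x b" using path_snoc[OF Qa False] e by blast
  then have "Qa @ [b] = Qb" using path_unique[OF T] Qb by blast
  moreover have "a \<in> set Qa" using Qa unfolding path_iff by auto
  ultimately show ?thesis by auto
qed simp

lemma tree_B':
  assumes T: "is_tree V E" and x: "x \<in> V" and e: "{a,b} \<in> E"
  shows "\<exists>s t Q. {s,t} = {a,b} \<and> is_path V E Q x s \<and> t \<in> set Q"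
proof -
  have ab: "a \<in> V" "b \<in> V" using edge_neq[OF tree_sg[OF T] e] by auto
  have conn: "graph_connected V E" using T unfolding is_tree_def by blast
  obtain Qa where Qa: "is_path V E Qa x a" using conn x ab unfolding graph_connected_def by blast
  obtain Qb where Qb: "is_path V E Qb x b" using conn x ab unfolding graph_connected_def by blast
  from tree_B[OF T Qa Qb e] show ?thesis
  proof
    assume "b \<in> set Qa" then show ?thesis using Qa by blast
  next
    assume "a \<in> set Qb" then show ?thesis using Qb by (metis insert_commute)
  qed
qed

lemma path_mid:
  assumes T: "is_tree V E" and R: "is_path V E R s s'" and e: "{s,t} \<in> E" and e': "{t',s'} \<in> E"
    and t: "t \<in> set R" and t': "t' \<in> set R" and ts: "t \<noteq> s'"
  shows "\<exists>mid. R = s # mid @ [s'] \<and> mid \<noteq> [] \<and> hd mid = t \<and> last mid = t'"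
proof -
  obtain M where M: "R = s # t # M" using path_start[OF T R e t] by blast
  have Rr: "is_path V E (rev R) s' s" using path_rev[OF R] .
  have "{s',t'} \<in> E" using e' by (simp add: insert_commute)
  then obtain M' where M': "rev R = s' # t' # M'" using path_start[OF T Rr] t' by auto
  have "last R = s'" using R unfolding path_iff by auto
  have "M \<noteq> []"
  proof
    assume "M = []" then have "R = [s,t]" using M by simp
    then have "last R = t" by simp
    then show False using \<open>last R = s'\<close> ts by simp
  qed
  have R2: "R = rev M' @ [t', s']" using M' by (metis append.assoc append_Cons append_Nil rev.simps(2) rev_rev_ident)
  define mid where "mid = t # butlast M"
  have "R = s # mid @ [s']" unfolding mid_def using M \<open>M \<noteq> []\<close> \<open>last R = s'\<close>
    by (metis append_butlast_last_id append_Cons last.simps last_ConsR list.distinct(1))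
  moreover have "last mid = t'"
  proof -
    have "butlast R = s # mid" using \<open>R = s # mid @ [s']\<close> by (simp add: butlast_append)
    moreover have "butlast R = rev M' @ [t']" using R2 by (simp add: butlast_append)
    ultimately have "s # mid = rev M' @ [t']" by simp
    then have "last (s # mid) = t'" by (metis last_snoc)
    then show ?thesis unfolding mid_def by simp
  qed
  ultimately show ?thesis unfolding mid_def by auto
qed

lemma internal_snoc: "ys \<noteq> [] \<Longrightarrow> internal (ys @ [w]) = set (tl ys)"
  unfolding internal_def by (cases ys) auto

lemma internal_mid: "internal (x # mid @ [y]) = set mid"
  unfolding internal_def by simp

lemma internal_rev: "internal (rev xs) = internal xs"
proof (cases xs)
  case (Cons a ys)
  then show ?thesis unfolding internal_def by (cases ys rule: rev_cases) auto
qed (simp add: internal_def)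

lemma internal_map: "internal (map f xs) = f ` internal xs"
  unfolding internal_def by (metis map_butlast map_tl set_map)



lemma distinct_proj: "distinct xs \<Longrightarrow> distinct (map projl (filter isl xs))"
proof (induction xs)
  case (Cons z xs)
  show ?case
  proof (cases "isl z")
    case True
    have "projl z \<notin> projl ` set (filter isl xs)"
    proof
      assume "projl z \<in> projl ` set (filter isl xs)"
      then obtain w where w: "w \<in> set xs" "isl w" "projl w = projl z" by auto
      then have "w = z" using True by (metis sum.collapse(1))
      then show False using w Cons.prems by simp
    qed
    then show ?thesis using Cons True by simp
  qed (use Cons in simp)
qed simp

lemma dir2:
  fixes VT :: "'a set" and VH :: "'b set" and c :: "('a + 'a set \<times> 'b) \<Rightarrow> nat"
  assumes sg: "simple_graph VT ET"
    and rc: "rainbow_vertex_coloring (corona_V VT ET VH) (corona_E VT ET VH EH) c k"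
  shows "rainbow_vertex_coloring VT ET (c \<circ> Inl) k"
proof -
  have inV: "\<And>w. w \<in> VT \<Longrightarrow> (Inl w :: 'a + 'a set \<times> 'b) \<in> corona_V VT ET VH"
    by (simp add: corona_V_def)
  have Vin: "\<And>w. (Inl w :: 'a + 'a set \<times> 'b) \<in> corona_V VT ET VH \<Longrightarrow> w \<in> VT"
    by (auto simp: corona_V_def)
  have col: "(c \<circ> Inl) ` VT \<subseteq> {1..k}" using rc inV unfolding rainbow_vertex_coloring_def by auto
  have "\<exists>ys. is_path VT ET ys u v \<and> inj_on (c \<circ> Inl) (internal ys)" if u: "u \<in> VT" and v: "v \<in> VT" for u v
  proof -
    obtain xs where P: "is_path (corona_V VT ET VH) (corona_E VT ET VH EH) xs (Inl u) (Inl v)"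
      and inj: "inj_on c (internal xs)"
      using rc inV[OF u] inV[OF v] unfolding rainbow_vertex_coloring_def by blast
    from P have xs: "xs \<noteq> []" "hd xs = Inl u" "last xs = Inl v" "distinct xs"
      "set xs \<subseteq> corona_V VT ET VH" "successively (\<lambda>x y. {x,y} \<in> corona_E VT ET VH EH) xs"
      unfolding path_iff by auto
    obtain rest where xr: "xs = Inl u # rest" using xs(1,2) by (cases xs) auto
    show ?thesis
    proof (cases "rest = []")
      case True
      then have "u = v" using xr xs(3) by simp
      have "is_path VT ET [u] u v" using u \<open>u = v\<close> unfolding path_iff by simp
      moreover have "internal [u] = {}" unfolding internal_def by simp
      ultimately show ?thesis by (metis inj_on_empty)
    next
      case False
      then obtain mid where "rest = mid @ [Inl v]" using xr xs(3)
        by (metis append_butlast_last_id last_ConsR)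
      then have xm: "xs = Inl u # mid @ [Inl v]" using xr by simp
      define ys where "ys = map projl (filter isl xs)"
      have ys: "ys = u # map projl (filter isl mid) @ [v]" unfolding ys_def xm by simp
      have "is_path VT ET ys u v"
        unfolding path_iff
      proof (intro conjI)
        show "ys \<noteq> []" "hd ys = u" "last ys = v" using ys by auto
        show "distinct ys" unfolding ys_def using distinct_proj xs(4) by blast
        show "set ys \<subseteq> VT"
        proof
          fix w assume "w \<in> set ys"
          then obtain z where z: "z \<in> set xs" "isl z" "w = projl z" unfolding ys_def by auto
          then have "Inl w = z" by simp
          then show "w \<in> VT" using Vin z xs(5) by blast
        qed
        show "successively (\<lambda>x y. {x, y} \<in> ET) ys"
          unfolding ys_def using proj_succ[OF sg xs(6,4,1)] xs(2,3) by simp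
      qed
      moreover have "inj_on (c \<circ> Inl) (internal ys)"
      proof -
        have i1: "internal ys = set (map projl (filter isl mid))" unfolding ys by (rule internal_mid)
        have i2: "internal xs = set mid" unfolding xm by (rule internal_mid)
        have sub: "Inl ` internal ys \<subseteq> internal xs" unfolding i1 i2 by auto
        show ?thesis unfolding inj_on_def
        proof (intro ballI impI)
          fix p q assume p: "p \<in> internal ys" and q: "q \<in> internal ys" and "(c \<circ> Inl) p = (c \<circ> Inl) q"
          then have "c (Inl p) = c (Inl q)" by simp
          moreover have "Inl p \<in> internal xs" "Inl q \<in> internal xs" using sub p q by auto
          ultimately have "(Inl p :: 'a + 'a set \<times> 'b) = Inl q" using inj unfolding inj_on_def by blast
          then show "p = q" by simp
        qed
      qed
      ultimately show ?thesis by blast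
    qed
  qed
  then show ?thesis using col unfolding rainbow_vertex_coloring_def by blast
qed



lemma succ_mid: "successively P (x # ys @ [y]) \<Longrightarrow> successively P ys"
  by (auto simp: successively_Cons successively_append_iff)

lemma dir1:
  fixes VT :: "'a set" and VH :: "'b set" and c :: "'a \<Rightarrow> nat"
  assumes T: "is_tree VT ET" and rc: "rainbow_vertex_coloring VT ET c k"
  shows "rainbow_vertex_coloring (corona_V VT ET VH) (corona_E VT ET VH EH) (case_sum c (\<lambda>_. 1)) k"
proof -
  define CV where "CV = corona_V VT ET VH"
  define CE where "CE = corona_E VT ET VH EH"
  define c' :: "'a + 'a set \<times> 'b \<Rightarrow> nat" where "c' = case_sum c (\<lambda>_. 1)"
  have sg: "simple_graph VT ET" using T by (rule tree_sg)
  have allrb: "inj_on c (internal Q)" if Q: "is_path VT ET Q x y" for Q x y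
  proof -
    have "x \<in> VT" "y \<in> VT" using Q unfolding path_iff by auto
    then obtain Q' where Q': "is_path VT ET Q' x y" "inj_on c (internal Q')"
      using rc unfolding rainbow_vertex_coloring_def by blast
    then show ?thesis using path_unique[OF T Q Q'(1)] by simp
  qed
  have "VT \<noteq> {}" using T unfolding is_tree_def graph_connected_def by blast
  then have k1: "1 \<le> k" using rc unfolding rainbow_vertex_coloring_def by fastforce
  have col: "c' ` CV \<subseteq> {1..k}"
  proof
    fix z assume "z \<in> c' ` CV"
    then obtain p where p: "p \<in> CV" "z = c' p" by blast
    show "z \<in> {1..k}"
    proof (cases p)
      case (Inl w)
      then have "w \<in> VT" using p unfolding CV_def corona_V_def by auto
      then show ?thesis using rc p Inl unfolding rainbow_vertex_coloring_def c'_def by auto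
    next
      case (Inr r) then show ?thesis using p k1 unfolding c'_def by simp
    qed
  qed
  have inCV_l: "Inl w \<in> CV" if "w \<in> VT" for w using that unfolding CV_def corona_V_def by simp
  have inCV_r: "Inr (e,h) \<in> CV" if "e \<in> ET" "h \<in> VH" for e h
    using that unfolding CV_def corona_V_def by simp
  have CVr: "e \<in> ET \<and> h \<in> VH" if "Inr (e,h) \<in> CV" for e h
    using that unfolding CV_def corona_V_def by auto
  have CVl: "w \<in> VT" if "Inl w \<in> CV" for w
    using that unfolding CV_def corona_V_def by auto
  have CE_ll: "{Inl a, Inl b} \<in> CE" if "{a,b} \<in> ET" for a b
  proof -
    have "(Inl ` {a,b} :: ('a + 'a set \<times> 'b) set) = {Inl a, Inl b}" by simp
    moreover have "Inl ` {a,b} \<in> (image Inl) ` ET" using that by (rule imageI)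
    ultimately show ?thesis unfolding CE_def corona_E_def by (intro UnI1) simp
  qed
  have CE_lr: "{Inl u, Inr (e,h)} \<in> CE" if "e \<in> ET" "u \<in> e" "h \<in> VH" for u e h
  proof -
    have "{Inl u, Inr (e,h)} \<in> {{Inl u, Inr (e, h)} | e u h. e \<in> ET \<and> u \<in> e \<and> h \<in> VH}"
      using that by blast
    then show ?thesis unfolding CE_def corona_E_def by (rule UnI2)
  qed
  have CE_rl: "{Inr (e,h), Inl u} \<in> CE" if "e \<in> ET" "u \<in> e" "h \<in> VH" for u e h
    using CE_lr[OF that] by (simp add: insert_commute)
  have lift: "is_path CV CE (map Inl Q) (Inl x) (Inl y)" if Q: "is_path VT ET Q x y" for Q x y
  proof -
    from Q have q: "Q \<noteq> []" "hd Q = x" "last Q = y" "distinct Q" "set Q \<subseteq> VT"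
      "successively (\<lambda>x y. {x,y} \<in> ET) Q" unfolding path_iff by auto
    have "successively (\<lambda>x y. {x,y} \<in> CE) (map Inl Q)"
      unfolding successively_map using q(6) by (rule successively_mono) (rule CE_ll)
    moreover have "set (map Inl Q) \<subseteq> CV" using q(5) inCV_l by auto
    moreover have "distinct (map Inl Q)" using q(4) by (simp add: distinct_map)
    ultimately show ?thesis unfolding path_iff using q(1-3) by (simp add: hd_map last_map)
  qed
  have injl: "inj_on c' (Inl ` A)" if "inj_on c A" for A
    using that unfolding inj_on_def c'_def by auto
  define good where "good p q \<longleftrightarrow> (\<exists>xs. is_path CV CE xs p q \<and> inj_on c' (internal xs))" for p q
  have good_I: "good p q" if "is_path CV CE xs p q" "inj_on c' (internal xs)" for xs p q
    using that unfolding good_def by blast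
  have good_sym: "good q p" if gpq: "good p q" for p q
  proof -
    obtain xs where "is_path CV CE xs p q" "inj_on c' (internal xs)" using gpq unfolding good_def by blast
    then have "is_path CV CE (rev xs) q p" "inj_on c' (internal (rev xs))"
      by (simp_all add: path_rev internal_rev)
    then show ?thesis unfolding good_def by blast
  qed
  have ends_VT: "x \<in> VT" if ex: "e \<in> ET" "x \<in> e" for e x
  proof -
    obtain u v where "u \<in> VT" "v \<in> VT" "e = {u,v}" using sg ex(1) unfolding simple_graph_def by blast
    then show ?thesis using ex(2) by auto
  qed
  have LL: "good (Inl x) (Inl y)" if xy: "x \<in> VT" "y \<in> VT" for x y
  proof -
    obtain Q where Q: "is_path VT ET Q x y" "inj_on c (internal Q)"
      using rc xy unfolding rainbow_vertex_coloring_def by blast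
    have "inj_on c' (internal (map Inl Q))" unfolding internal_map using injl[OF Q(2)] .
    then show ?thesis unfolding good_def using lift[OF Q(1)] by blast
  qed
  have LR: "good (Inl x) (Inr (e,h))" if x: "x \<in> VT" and e: "e \<in> ET" and h: "h \<in> VH" for x e h
  proof -
    obtain a b where ab: "a \<noteq> b" "e = {a,b}" using sg e unfolding simple_graph_def by blast
    show ?thesis
    proof (cases "x \<in> e")
      case True
      have "is_path CV CE [Inl x, Inr (e,h)] (Inl x) (Inr (e,h))"
        unfolding path_iff using inCV_l[OF x] inCV_r[OF e h] CE_lr[OF e True h] by simp
      moreover have "inj_on c' (internal [Inl x, Inr (e,h)])" unfolding internal_def by simp
      ultimately show ?thesis by (rule good_I)
    next
      case False
      have eab: "{a,b} \<in> ET" using e ab by simp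
      obtain s t Q where stQ: "{s,t} = {a,b}" "is_path VT ET Q x s" "t \<in> set Q"
        using tree_B'[OF T x eab] by blast
      have st: "t \<in> e" "s \<in> e" "t \<noteq> s" using stQ ab by (auto simp: doubleton_eq_iff)
      obtain Q1 Q2 where Q12: "Q = Q1 @ t # Q2" using stQ(3) by (meson split_list)
      have "hd Q = x" "last Q = s" using stQ(2) unfolding path_iff by auto
      have "t \<noteq> x" using False st by blast
      then have "Q1 \<noteq> []" using \<open>hd Q = x\<close> Q12 by auto
      then obtain q Q1' where q: "Q1 = q # Q1'" by (cases Q1) auto
      have "Q2 \<noteq> []" using \<open>last Q = s\<close> Q12 st by auto
      then obtain Q2' l where l: "Q2 = Q2' @ [l]" by (cases Q2 rule: rev_cases) auto
      have iQ: "internal Q = set (Q1' @ t # Q2')"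
        using Q12 q l internal_mid[of q "Q1' @ t # Q2'" l] by simp
      have P1: "is_path VT ET (Q1 @ [t]) x t" using path_prefix stQ(2) Q12 by metis
      have P2: "is_path CV CE (map Inl (Q1 @ [t]) @ [Inr (e,h)]) (Inl x) (Inr (e,h))"
        by (rule path_snoc[OF lift[OF P1]]) (use inCV_r[OF e h] CE_lr[OF e st(1) h] in auto)
      have "internal (map Inl (Q1 @ [t]) @ [Inr (e,h)]) = Inl ` set (Q1' @ [t])"
        using internal_snoc[of "map Inl (Q1 @ [t])" "Inr (e,h)"] q by simp
      moreover have "set (Q1' @ [t]) \<subseteq> internal Q" using iQ by auto
      then have "inj_on c (set (Q1' @ [t]))" by (rule inj_on_subset[OF allrb[OF stQ(2)]])
      ultimately show ?thesis unfolding good_def using P2 injl by metis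
    qed
  qed
  have RR: "good (Inr (e,h)) (Inr (e',h'))" if e: "e \<in> ET" "h \<in> VH" and e': "e' \<in> ET" "h' \<in> VH"
    for e h e' h'
  proof (cases "(e,h) = (e',h')")
    case True
    have "is_path CV CE [Inr (e,h)] (Inr (e,h)) (Inr (e',h'))"
      unfolding path_iff using inCV_r[OF e] True by simp
    moreover have "inj_on c' (internal [Inr (e,h)])" unfolding internal_def by simp
    ultimately show ?thesis by (rule good_I)
  next
    case neq: False
    show ?thesis
    proof (cases "e \<inter> e' = {}")
      case False
      then obtain w where w: "w \<in> e" "w \<in> e'" by blast
      have "is_path CV CE [Inr (e,h), Inl w, Inr (e',h')] (Inr (e,h)) (Inr (e',h'))"
        unfolding path_iff using inCV_r[OF e] inCV_r[OF e'] inCV_l[OF ends_VT[OF e(1) w(1)]]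
          CE_rl[OF e(1) w(1) e(2)] CE_lr[OF e'(1) w(2) e'(2)] neq by auto
      moreover have "inj_on c' (internal [Inr (e,h), Inl w, Inr (e',h')])" unfolding internal_def by simp
      ultimately show ?thesis by (rule good_I)
    next
      case disj: True
      obtain x x' where xx: "x \<noteq> x'" "e' = {x,x'}" using sg e'(1) unfolding simple_graph_def by blast
      have xV: "x \<in> VT" using ends_VT[OF e'(1)] xx by blast
      have "x \<notin> e" using disj xx by blast
      obtain a b where ab: "a \<noteq> b" "e = {a,b}" using sg e(1) unfolding simple_graph_def by blast
      have eab: "{a,b} \<in> ET" using e(1) ab by simp
      obtain s t Q where stQ: "{s,t} = {a,b}" "is_path VT ET Q x s" "t \<in> set Q"
        using tree_B'[OF T xV eab] by blast
      have st: "t \<in> e" "s \<in> e" "{s,t} \<in> ET" using stQ ab e(1) by auto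
      have sV: "s \<in> VT" using ends_VT[OF e(1) st(2)] .
      have exx: "{x,x'} \<in> ET" using e'(1) xx by simp
      obtain s' t' R where stR: "{s',t'} = {x,x'}" "is_path VT ET R s s'" "t' \<in> set R"
        using tree_B'[OF T sV exx] by blast
      have st': "s' \<in> e'" "t' \<in> e'" "{t',s'} \<in> ET" using stR xx e'(1) by (auto simp: insert_commute)
      have "last R = s'" using stR(2) unfolding path_iff by auto
      then have "s' \<in> set R" using stR(2) unfolding path_iff by auto
      then have "x \<in> set R" using stR(1,3) by (auto simp: doubleton_eq_iff)
      then obtain R1 R2 where R12: "R = R1 @ x # R2" by (meson split_list)
      have "is_path VT ET (R1 @ [x]) s x" using path_prefix stR(2) R12 by metis
      then have RQ: "R1 @ [x] = rev Q" by (rule path_unique[OF T _ path_rev[OF stQ(2)]])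
      have "t \<in> set (R1 @ [x])" unfolding RQ using stQ(3) by simp
      then have tR: "t \<in> set R" using R12 by auto
      have "t \<noteq> s'" using disj st(1) st'(1) by auto
      then obtain mid where mid: "R = s # mid @ [s']" "mid \<noteq> []" "hd mid = t" "last mid = t'"
        using path_mid[OF T stR(2) st(3) st'(3) tR stR(3)] by blast
      have Rp: "distinct R" "set R \<subseteq> VT" "successively (\<lambda>x y. {x,y} \<in> ET) R"
        using stR(2) unfolding path_iff by auto
      have "e \<noteq> e'" using disj st by blast
      define xs where "xs = Inr (e,h) # map Inl mid @ [Inr (e',h')]"
      have "is_path CV CE xs (Inr (e,h)) (Inr (e',h'))"
        unfolding path_iff
      proof (intro conjI)
        show "xs \<noteq> []" "hd xs = Inr (e,h)" "last xs = Inr (e', h')" unfolding xs_def by auto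
        show "distinct xs" unfolding xs_def using Rp(1) mid(1) \<open>e \<noteq> e'\<close>
          by (auto simp: distinct_map)
        show "set xs \<subseteq> CV" unfolding xs_def using Rp(2) mid(1) inCV_r[OF e] inCV_r[OF e'] inCV_l
          by auto
        have sm: "successively (\<lambda>x y. {x,y} \<in> ET) mid" using Rp(3) mid(1) succ_mid by metis
        have "successively (\<lambda>x y. {x,y} \<in> CE) (map Inl mid)"
          unfolding successively_map using sm by (rule successively_mono) (rule CE_ll)
        moreover have "{Inr (e,h), hd (map Inl mid)} \<in> CE"
          using mid(2,3) CE_rl[OF e(1) st(1) e(2)] by (simp add: hd_map)
        moreover have "{last (map Inl mid), Inr (e',h')} \<in> CE"
          using mid(2,4) CE_lr[OF e'(1) st'(2) e'(2)] by (simp add: last_map)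
        ultimately show "successively (\<lambda>x y. {x, y} \<in> CE) xs"
          unfolding xs_def using mid(2) by (auto simp: successively_Cons successively_append_iff)
      qed
      moreover have "internal xs = Inl ` set mid" unfolding xs_def internal_mid by simp
      moreover have "inj_on c (set mid)" using allrb[OF stR(2)] mid(1) internal_mid by metis
      ultimately show ?thesis unfolding good_def using injl by metis
    qed
  qed
  have all: "good p q" if "p \<in> CV" "q \<in> CV" for p q
  proof (cases p)
    case (Inl x)
    then have x: "x \<in> VT" using CVl that by blast
    show ?thesis
    proof (cases q)
      case (Inl y) then show ?thesis using LL x CVl that \<open>p = Inl x\<close> by blast
    next
      case (Inr r) then obtain e h where "q = Inr (e,h)" by (cases r) auto
      then show ?thesis using LR x CVr that \<open>p = Inl x\<close> by blast
    qed
  next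
    case (Inr r) then obtain e h where ph: "p = Inr (e,h)" by (cases r) auto
    then have eh: "e \<in> ET" "h \<in> VH" using CVr that by auto
    show ?thesis
    proof (cases q)
      case (Inl y) then show ?thesis using LR eh CVl that ph good_sym by blast
    next
      case (Inr r') then obtain e' h' where "q = Inr (e',h')" by (cases r') auto
      then show ?thesis using RR eh CVr that ph by blast
    qed
  qed
  show ?thesis using col all unfolding rainbow_vertex_coloring_def good_def CV_def CE_def c'_def
    by blast
qed


theorem theorem4:
  fixes VT :: "'a set" and ET :: "'a set set" and VH :: "'b set" and EH :: "'b set set"
    and m n :: nat
  assumes "m \<ge> 2" and "n \<ge> 2"
    and "is_tree VT ET" and "card VT = m"
    and "simple_graph VH EH" and "graph_connected VH EH" and "card VH = n"
  shows "rvc (corona_V VT ET VH) (corona_E VT ET VH EH) = rvc VT ET"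
proof -
  have sg: "simple_graph VT ET" using assms(3) by (rule tree_sg)
  have eq: "(\<exists>c. rainbow_vertex_coloring (corona_V VT ET VH) (corona_E VT ET VH EH) c k)
     \<longleftrightarrow> (\<exists>c. rainbow_vertex_coloring VT ET c k)" for k
  proof
    assume "\<exists>c. rainbow_vertex_coloring (corona_V VT ET VH) (corona_E VT ET VH EH) c k"
    then obtain c where "rainbow_vertex_coloring (corona_V VT ET VH) (corona_E VT ET VH EH) c k" by blast
    then show "\<exists>c. rainbow_vertex_coloring VT ET c k" using dir2[OF sg] by blast
  next
    assume "\<exists>c. rainbow_vertex_coloring VT ET c k"
    then obtain c where "rainbow_vertex_coloring VT ET c k" by blast
    then show "\<exists>c. rainbow_vertex_coloring (corona_V VT ET VH) (corona_E VT ET VH EH) c k"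
      using dir1[OF assms(3)] by blast
  qed
  show ?thesis unfolding rvc_def eq ..
qed

end
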